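(* Let $N\ge2$, $d\in\mathbb{N}^*$, $\alpha>0$, $A\in\mathbb{R}_+^{N\times N}$, and let $\psi:\mathbb{R}_+\to\mathbb{R}_+$ satisfy $(r_1-r_2)(\psi(r_1)-\psi(r_2))\le0$ for all $r_1,r_2\ge0$ and $0<\psi(r)\le\psi(0)\le1$. Assume the hierarchical leadership condition: $A_{ij}>0$ only if $j<i$, and for all $i>1$ there exists $j<i$ with $A_{ij}>0$. Consider solutions on $\mathbb{R}_+$ of $$\frac{dx_i}{dt}=v_i,\qquad\frac{dv_i}{dt}=\alpha\sum_{j\ne i}Q_t(i,j)(v_j-v_i)$$ with either (CS) $Q_t(i,j)=A_{ij}\psi(\|x_j(t)-x_i(t)\|_2)$, or (MT) $Q_t(i,j)=\dfrac{A_{ij}\psi(\|x_i(t)-x_j(t)\|_2)}{a_i+\sum_{k\ne i}A_{ik}\psi(\|x_i(t)-x_k(t)\|_2)}$, where $a\in\mathbb{R}_+^N$ satisfies $a_i>0$ whenever $A_{ij}=0$ for all $j\ne i$. Then the solution flocks provided $$V(0)<C_{HL}\sup_{r\ge X(0)}(r-X(0))\psi(r)\quad\text{for (CS)},$$ $$V(0)<M_{HL}\sup_{r\ge X(0)}(r-X(0))\frac{(\bar a+A_* )\psi(r)}{\bar a+A_*\psi(r)}\quad\text{for (MT)},$$ where $A_*=\inf_{i>1}\sum_{j\ne i}A_{ij}$, $B_*=\inf_{i>1}\sum_{j\ne i}B_{ij}$ with $B_{ij}=\dfrac{A_{ij}}{a_i+\sum_{k\ne i}A_{ik}}$, $C_{HL}=\alpha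 A_*/H$, $M_{HL}=\alpha B_*/H$, and $\bar a=\sup_{i>1}a_i$. In particular, for (MT), if $\bar a=0$ the flocking is unconditional (occurs for every initial condition).
   Context: The interaction graph has vertices $\{1,\dots,N\}$ and an edge $i\to j$ iff $i\ne j$ and $A_{ij}>0$; the length of a path is its number of edges. For $i>1$, $h_i$ is the maximal length of a path from $i$ to $1$, and $H=\sup_{i>1}h_i$. $X(t)=\sup_{i,j}\|x_i(t)-x_j(t)\|_2$, $V(t)=\sup_{i,j}\|v_i(t)-v_j(t)\|_2$; flocking means $\sup_{t\ge0}X(t)<+\infty$ and $V(t)\to0$ as $t\to+\infty$. *)

theory Defs
  imports "HOL-Analysis.Analysis"
begin

text \<open>Agents are indexed by 1..N; the interaction matrix is A :: nat => nat => real.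
  Edge i -> j iff i ~= j and A i j > 0.\<close>

definition is_path_to_1 :: "(nat \<Rightarrow> nat \<Rightarrow> real) \<Rightarrow> nat \<Rightarrow> nat \<Rightarrow> nat list \<Rightarrow> bool" where
  "is_path_to_1 A N i p \<longleftrightarrow> p \<noteq> [] \<and> hd p = i \<and> last p = 1 \<and> set p \<subseteq> {1..N} \<and> distinct p
     \<and> (\<forall>k. Suc k < length p \<longrightarrow> p ! k \<noteq> p ! Suc k \<and> A (p ! k) (p ! Suc k) > 0)"

definition hlen :: "(nat \<Rightarrow> nat \<Rightarrow> real) \<Rightarrow> nat \<Rightarrow> nat \<Rightarrow> nat" where
  "hlen A N i = Max {length p - 1 | p. is_path_to_1 A N i p}"

definition Hdepth :: "(nat \<Rightarrow> nat \<Rightarrow> real) \<Rightarrow> nat \<Rightarrow> nat" where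
  "Hdepth A N = Max (hlen A N ` {2..N})"

definition Astar :: "(nat \<Rightarrow> nat \<Rightarrow> real) \<Rightarrow> nat \<Rightarrow> real" where
  "Astar A N = Min ((\<lambda>i. \<Sum>j\<in>{1..N} - {i}. A i j) ` {2..N})"

definition Bmat :: "(nat \<Rightarrow> nat \<Rightarrow> real) \<Rightarrow> (nat \<Rightarrow> real) \<Rightarrow> nat \<Rightarrow> nat \<Rightarrow> nat \<Rightarrow> real" where
  "Bmat A a N i j = A i j / (a i + (\<Sum>k\<in>{1..N} - {i}. A i k))"

definition Bstar :: "(nat \<Rightarrow> nat \<Rightarrow> real) \<Rightarrow> (nat \<Rightarrow> real) \<Rightarrow> nat \<Rightarrow> real" where
  "Bstar A a N = Min ((\<lambda>i. \<Sum>j\<in>{1..N} - {i}. Bmat A a N i j) ` {2..N})"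

definition abar :: "(nat \<Rightarrow> real) \<Rightarrow> nat \<Rightarrow> real" where
  "abar a N = Max (a ` {2..N})"

definition diam :: "nat \<Rightarrow> (nat \<Rightarrow> 'a::real_normed_vector) \<Rightarrow> real" where
  "diam N y = Max {norm (y i - y j) | i j. i \<in> {1..N} \<and> j \<in> {1..N}}"

definition Q_CS :: "(nat \<Rightarrow> nat \<Rightarrow> real) \<Rightarrow> (real \<Rightarrow> real) \<Rightarrow> (real \<Rightarrow> nat \<Rightarrow> 'a::real_normed_vector)
    \<Rightarrow> real \<Rightarrow> nat \<Rightarrow> nat \<Rightarrow> real" where
  "Q_CS A \<psi> x t i j = A i j * \<psi> (norm (x t j - x t i))"

definition Q_MT :: "(nat \<Rightarrow> nat \<Rightarrow> real) \<Rightarrow> (nat \<Rightarrow> real) \<Rightarrow> nat \<Rightarrow> (real \<Rightarrow> real)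
    \<Rightarrow> (real \<Rightarrow> nat \<Rightarrow> 'a::real_normed_vector) \<Rightarrow> real \<Rightarrow> nat \<Rightarrow> nat \<Rightarrow> real" where
  "Q_MT A a N \<psi> x t i j = A i j * \<psi> (norm (x t i - x t j))
      / (a i + (\<Sum>k\<in>{1..N} - {i}. A i k * \<psi> (norm (x t i - x t k))))"

definition solves :: "nat \<Rightarrow> real \<Rightarrow> (real \<Rightarrow> nat \<Rightarrow> nat \<Rightarrow> real)
    \<Rightarrow> (real \<Rightarrow> nat \<Rightarrow> 'a::real_normed_vector) \<Rightarrow> (real \<Rightarrow> nat \<Rightarrow> 'a) \<Rightarrow> bool" where
  "solves N \<alpha> Q x v \<longleftrightarrow> (\<forall>t\<ge>0. \<forall>i\<in>{1..N}.
      ((\<lambda>s. x s i) has_vector_derivative v t i) (at t within {0..}) \<and>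
      ((\<lambda>s. v s i) has_vector_derivative
          (\<alpha> *\<^sub>R (\<Sum>j\<in>{1..N} - {i}. Q t i j *\<^sub>R (v t j - v t i)))) (at t within {0..}))"

definition flocks :: "nat \<Rightarrow> (real \<Rightarrow> nat \<Rightarrow> 'a::real_normed_vector) \<Rightarrow> (real \<Rightarrow> nat \<Rightarrow> 'a) \<Rightarrow> bool" where
  "flocks N x v \<longleftrightarrow> bdd_above ((\<lambda>t. diam N (x t)) ` {0..})
      \<and> ((\<lambda>t. diam N (v t)) \<longlongrightarrow> 0) at_top"

end

theory Submission
  imports Defs
begin



definition Ef :: "real \<Rightarrow> nat \<Rightarrow> real \<Rightarrow> real" where
  "Ef g k t = exp (- g * t) * (\<Sum>l<k. (g*t)^l / fact l)"

lemma Ef_0[simp]: "Ef g 0 t = 0" by (simp add: Ef_def)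

lemma Ef_nonneg: "g \<ge> 0 \<Longrightarrow> t \<ge> 0 \<Longrightarrow> Ef g k t \<ge> 0"
  unfolding Ef_def by (intro mult_nonneg_nonneg sum_nonneg) auto

lemma Ef_mono: assumes "g \<ge> 0" "t \<ge> 0" "k \<le> k'" shows "Ef g k t \<le> Ef g k' t"
  unfolding Ef_def
proof (rule mult_left_mono)
  show "(\<Sum>l<k. (g*t)^l / fact l) \<le> (\<Sum>l<k'. (g*t)^l / fact l)"
    by (rule sum_mono2) (use assms in auto)
qed simp

lemma Ef_at0: "k \<ge> 1 \<Longrightarrow> Ef g k 0 = 1"
proof -
  assume "k \<ge> 1"
  then obtain m where k: "k = Suc m" by (cases k) auto
  have "(\<Sum>l<Suc m. (g*0)^l / fact l) = (1::real)"
    by (induction m) auto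
  then show ?thesis by (simp add: Ef_def k)
qed

lemma S_deriv: "((\<lambda>t. \<Sum>l<Suc k. (g*t)^l / fact l) has_real_derivative g * (\<Sum>l<k. (g*t)^l / fact l)) (at t)"
proof (induction k)
  case 0
  then show ?case by simp
next
  case (Suc k)
  have d: "((\<lambda>t. (g*t)^Suc k / fact (Suc k)) has_real_derivative g * ((g*t)^k / fact k)) (at t)"
  proof -
    have e: "(\<lambda>t. (g*t)^Suc k / fact (Suc k)) = (\<lambda>t. (g^Suc k / fact (Suc k)) * t^Suc k)"
      by (auto simp: power_mult_distrib)
    have "((\<lambda>t. (g^Suc k / fact (Suc k)) * t^Suc k) has_real_derivative (g^Suc k / fact (Suc k)) * (real (Suc k) * t ^ (Suc k - Suc 0))) (at t)"
      by (intro DERIV_cmult DERIV_pow)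
    moreover have "(g^Suc k / fact (Suc k)) * (real (Suc k) * t ^ (Suc k - Suc 0)) = g * ((g*t)^k / fact k)"
    proof -
      have "(g^Suc k / fact (Suc k)) * (real (Suc k) * t ^ k) = g^Suc k * t^k * (real (Suc k) / (real (Suc k) * fact k))"
        by (simp add: fact_Suc)
      also have "real (Suc k) / (real (Suc k) * fact k) = 1 / fact k" by simp
      finally show ?thesis by (simp add: power_mult_distrib)
    qed
    ultimately have "((\<lambda>t. (g^Suc k / fact (Suc k)) * t^Suc k) has_real_derivative g * ((g*t)^k / fact k)) (at t)"
      by (simp only:)
    then show ?thesis by (simp only: e)
  qed
  have "((\<lambda>t. (\<Sum>l<Suc k. (g*t)^l / fact l) + (g*t)^Suc k / fact (Suc k)) has_real_derivative
      g * (\<Sum>l<k. (g*t)^l / fact l) + g * ((g*t)^k / fact k)) (at t)"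
    by (rule DERIV_add[OF Suc d])
  then show ?case by (simp add: algebra_simps)
qed

lemma Ef_deriv: "(Ef g (Suc k) has_real_derivative (- g * Ef g (Suc k) t + g * Ef g k t)) (at t)"
proof -
  have "((\<lambda>t. exp (- g * t) * (\<Sum>l<Suc k. (g*t)^l / fact l)) has_real_derivative
     (exp (- g * t) * (- g)) * (\<Sum>l<Suc k. (g*t)^l / fact l) + (g * (\<Sum>l<k. (g*t)^l / fact l)) * exp (- g * t)) (at t)"
    by (rule DERIV_mult[OF _ S_deriv]) (auto intro!: derivative_eq_intros)
  then show ?thesis unfolding Ef_def[abs_def] by (simp add: algebra_simps)
qed

lemma Ef_lim: assumes "g > 0" shows "(Ef g k \<longlongrightarrow> 0) at_top"
proof -
  have "((\<lambda>t. \<Sum>l<k. (g*t)^l / exp (g*t) / fact l) \<longlongrightarrow> (\<Sum>l<k. 0 / fact l)) at_top"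
  proof (intro tendsto_sum)
    fix l
    have "filterlim (\<lambda>t. g*t) at_top at_top"
      using assms by (intro filterlim_tendsto_pos_mult_at_top[OF tendsto_const]) (auto simp: filterlim_ident)
    then have "((\<lambda>t. (g*t)^l / exp (g*t)) \<longlongrightarrow> 0) at_top"
      using tendsto_power_div_exp_0 filterlim_compose by blast
    then show "((\<lambda>t. (g*t)^l / exp (g*t) / fact l) \<longlongrightarrow> 0 / fact l) at_top"
      by (intro tendsto_divide) auto
  qed
  moreover have "Ef g k = (\<lambda>t. \<Sum>l<k. (g*t)^l / exp (g*t) / fact l)"
    by (rule ext) (simp add: Ef_def sum_distrib_left exp_minus field_simps)
  ultimately show ?thesis by simp
qed

definition Gf :: "real \<Rightarrow> nat \<Rightarrow> real \<Rightarrow> real" where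
  "Gf g H t = (\<Sum>l<H. Ef g (Suc l) t)"

lemma Gf_deriv: "(Gf g H has_real_derivative (- g * Ef g H t)) (at t)"
proof -
  have "(Gf g H has_real_derivative (\<Sum>l<H. - g * Ef g (Suc l) t + g * Ef g l t)) (at t)"
    unfolding Gf_def[abs_def] by (intro DERIV_sum Ef_deriv)
  moreover have "(\<Sum>l<H. - g * Ef g (Suc l) t + g * Ef g l t) = g * (\<Sum>l<H. Ef g l t - Ef g (Suc l) t)"
    by (simp add: sum_distrib_left algebra_simps)
  moreover have "(\<Sum>l<H. Ef g l t - Ef g (Suc l) t) = Ef g 0 t - Ef g H t"
    by (rule sum_lessThan_telescope')
  ultimately show ?thesis by simp
qed

lemma Gf_nonneg: "g \<ge> 0 \<Longrightarrow> t \<ge> 0 \<Longrightarrow> Gf g H t \<ge> 0"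
  unfolding Gf_def by (intro sum_nonneg Ef_nonneg)

lemma Gf_at0: "Gf g H 0 = H"
  unfolding Gf_def by (simp add: Ef_at0)

lemma cmp:
  fixes f f' :: "real \<Rightarrow> real"
  assumes d: "\<forall>t\<in>{0..T}. (f has_real_derivative f' t) (at t within {0..})"
    and f0: "f 0 \<le> 0" and neg: "\<forall>t\<in>{0..T}. f t > 0 \<longrightarrow> f' t \<le> 0" and t: "t \<in> {0..T}"
  shows "f t \<le> 0"
proof (rule ccontr)
  assume ft: "\<not> f t \<le> 0"
  have cont: "continuous_on {0..T} f"
  proof -
    have "continuous (at s within {0..}) f" if "s \<in> {0..T}" for s
      using d that DERIV_continuous by blast
    then have "continuous (at s within {0..T}) f" if "s \<in> {0..T}" for s
      using that continuous_within_subset[of s "{0..}" f "{0..T}"] by auto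
    then show ?thesis by (simp add: continuous_on_eq_continuous_within)
  qed
  define S where "S = {0..t} \<inter> f -` {..0}"
  have contt: "continuous_on {0..t} f" using cont t by (auto intro: continuous_on_subset)
  have "closed S" unfolding S_def by (rule continuous_closed_preimage[OF contt]) auto
  moreover have "0 \<in> S" using f0 t by (auto simp: S_def)
  moreover have "bdd_above S" unfolding S_def by (auto intro: bdd_aboveI[of _ t])
  ultimately have "Sup S \<in> S" using closed_contains_Sup by blast
  define t0 where "t0 = Sup S"
  have t0S: "t0 \<in> S" using \<open>Sup S \<in> S\<close> t0_def by simp
  then have ft0: "f t0 \<le> 0" and t0r: "0 \<le> t0" "t0 \<le> t" by (auto simp: S_def)
  have t0t: "t0 < t" using ft ft0 t0r by (cases "t0 = t") auto
  have pos: "f s > 0" if "t0 < s" "s \<le> t" for s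
  proof (rule ccontr)
    assume "\<not> f s > 0"
    then have "s \<in> S" using that t0r by (auto simp: S_def)
    then have "s \<le> t0" unfolding t0_def using \<open>bdd_above S\<close> by (rule cSup_upper)
    then show False using that by simp
  qed
  have "f t0 \<ge> f t"
  proof (rule DERIV_nonpos_imp_decreasing_open[OF less_imp_le[OF t0t]])
    fix s assume s: "t0 < s" "s < t"
    then have "s \<in> interior {0::real..}" using t0r by auto
    have "(f has_real_derivative f' s) (at s within {0..})"
      using d s t t0r by auto
    then have "(f has_real_derivative f' s) (at s)"
      using at_within_interior[OF \<open>s \<in> interior {0::real..}\<close>] by simp
    moreover have "f' s \<le> 0" using neg pos s t t0r by auto
    ultimately show "\<exists>y. DERIV f s :> y \<and> y \<le> 0" by blast
  next
    show "continuous_on {t0..t} f" using cont t t0r by (auto intro: continuous_on_subset)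
  qed
  then show False using ft ft0 by simp
qed




lemma diam_set: "{norm (y i - y j) | i j. i \<in> {1..N} \<and> j \<in> {1..N}} = (\<lambda>(i,j). norm (y i - y j)) ` ({1..N} \<times> {1..N})"
  by (auto simp: image_iff) (use atLeastAtMost_iff in blast)

lemma diam_ge: "i \<in> {1..N} \<Longrightarrow> j \<in> {1..N} \<Longrightarrow> norm (y i - y j) \<le> diam N y"
  unfolding diam_def diam_set by (rule Max_ge) auto

lemma diam_le: "N \<ge> 1 \<Longrightarrow> (\<And>i j. i \<in> {1..N} \<Longrightarrow> j \<in> {1..N} \<Longrightarrow> norm (y i - y j) \<le> c) \<Longrightarrow> diam N y \<le> c"
  unfolding diam_def diam_set by (subst Max_le_iff) auto

lemma diam_nonneg: "N \<ge> 1 \<Longrightarrow> 0 \<le> diam N y"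
  using diam_ge[of 1 N 1 y] by simp


lemma path_nth_le:
  assumes HL1: "\<forall>i\<in>{1..N}. \<forall>j\<in>{1..N}. A i j > 0 \<longrightarrow> j < i"
    and p: "is_path_to_1 A N i p"
  shows "k < length p \<Longrightarrow> p ! k \<le> i"
proof (induction k)
  case 0
  then show ?case using p by (auto simp: is_path_to_1_def hd_conv_nth)
next
  case (Suc k)
  have "A (p ! k) (p ! Suc k) > 0" using p Suc.prems by (auto simp: is_path_to_1_def)
  moreover have "p ! k \<in> set p" "p ! Suc k \<in> set p"
    using Suc.prems by (auto intro!: nth_mem)
  moreover have "set p \<subseteq> {1..N}" using p by (auto simp: is_path_to_1_def)
  ultimately have "A (p ! k) (p ! Suc k) > 0" "p ! k \<in> {1..N}" "p ! Suc k \<in> {1..N}" by auto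
  then have "p ! Suc k < p ! k" using HL1 by auto
  then show ?case using Suc by simp
qed

lemma path_cons:
  assumes HL1: "\<forall>i\<in>{1..N}. \<forall>j\<in>{1..N}. A i j > 0 \<longrightarrow> j < i"
    and p: "is_path_to_1 A N j p" and ji: "j < i" and i: "i \<in> {1..N}" and Aij: "A i j > 0"
  shows "is_path_to_1 A N i (i # p)"
proof -
  have "i \<notin> set p"
  proof
    assume "i \<in> set p"
    then obtain k where "k < length p" "p ! k = i" by (auto simp: in_set_conv_nth)
    then show False using path_nth_le[OF HL1 p] ji by fastforce
  qed
  moreover have "hd p = j" "p \<noteq> []" using p by (auto simp: is_path_to_1_def)
  moreover have "\<forall>k. Suc k < length (i#p) \<longrightarrow> (i#p)!k \<noteq> (i#p)!Suc k \<and> A ((i#p)!k) ((i#p)!Suc k) > 0"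
  proof (intro allI impI)
    fix k assume k: "Suc k < length (i#p)"
    show "(i#p)!k \<noteq> (i#p)!Suc k \<and> A ((i#p)!k) ((i#p)!Suc k) > 0"
    proof (cases k)
      case 0
      then show ?thesis using \<open>hd p = j\<close> \<open>p \<noteq> []\<close> ji Aij by (auto simp: hd_conv_nth)
    next
      case (Suc m)
      then show ?thesis using k p by (auto simp: is_path_to_1_def)
    qed
  qed
  ultimately show ?thesis using p i ji Aij
    unfolding is_path_to_1_def by auto
qed

lemma path_finite: "finite {length p - 1 | p. is_path_to_1 A N i p}"
proof (rule finite_subset[of _ "{..N}"])
  have "length p - 1 \<le> N" if p: "is_path_to_1 A N i p" for p
  proof -
    have "length p = card (set p)" using p by (simp add: is_path_to_1_def distinct_card)
    also have "card (set p) \<le> card {1..N}"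
      using p by (intro card_mono) (auto simp: is_path_to_1_def)
    finally show "length p - 1 \<le> N" by simp
  qed
  then show "{length p - 1 | p. is_path_to_1 A N i p} \<subseteq> {..N}" by auto
qed simp

lemma path_exists:
  assumes HL1: "\<forall>i\<in>{1..N}. \<forall>j\<in>{1..N}. A i j > 0 \<longrightarrow> j < i"
    and HL2: "\<forall>i\<in>{2..N}. \<exists>j\<in>{1..<i}. A i j > 0"
  shows "i \<in> {1..N} \<Longrightarrow> \<exists>p. is_path_to_1 A N i p"
proof (induction i rule: less_induct)
  case (less i)
  show ?case
  proof (cases "i = 1")
    case True
    then have "is_path_to_1 A N i [1]" using less.prems by (auto simp: is_path_to_1_def)
    then show ?thesis by blast
  next
    case False
    then have "i \<in> {2..N}" using less.prems by auto
    then obtain j where j: "j \<in> {1..<i}" "A i j > 0" using HL2 by blast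
    then obtain p where "is_path_to_1 A N j p" using less.IH less.prems by auto
    then have "is_path_to_1 A N i (i # p)" using path_cons[OF HL1] j less.prems by auto
    then show ?thesis by blast
  qed
qed

lemma hlen_attained:
  assumes HL1: "\<forall>i\<in>{1..N}. \<forall>j\<in>{1..N}. A i j > 0 \<longrightarrow> j < i"
    and HL2: "\<forall>i\<in>{2..N}. \<exists>j\<in>{1..<i}. A i j > 0" and i: "i \<in> {1..N}"
  shows "\<exists>p. is_path_to_1 A N i p \<and> hlen A N i = length p - 1"
proof -
  have "{length p - 1 | p. is_path_to_1 A N i p} \<noteq> {}" using path_exists[OF HL1 HL2 i] by auto
  then have "hlen A N i \<in> {length p - 1 | p. is_path_to_1 A N i p}"
    unfolding hlen_def by (intro Max_in path_finite)
  then show ?thesis by auto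
qed

lemma hlen_ge: "is_path_to_1 A N i p \<Longrightarrow> length p - 1 \<le> hlen A N i"
  unfolding hlen_def by (rule Max_ge[OF path_finite]) auto

lemma hlen_step:
  assumes HL1: "\<forall>i\<in>{1..N}. \<forall>j\<in>{1..N}. A i j > 0 \<longrightarrow> j < i"
    and HL2: "\<forall>i\<in>{2..N}. \<exists>j\<in>{1..<i}. A i j > 0"
    and i: "i \<in> {1..N}" and j: "j \<in> {1..N}" and Aij: "A i j > 0"
  shows "hlen A N j < hlen A N i"
proof -
  obtain p where p: "is_path_to_1 A N j p" "hlen A N j = length p - 1"
    using hlen_attained[OF HL1 HL2 j] by blast
  have "j < i" using HL1 i j Aij by auto
  then have "is_path_to_1 A N i (i # p)" using path_cons[OF HL1 p(1) _ i Aij] by auto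
  then have "length (i # p) - 1 \<le> hlen A N i" by (rule hlen_ge)
  moreover have "p \<noteq> []" using p by (auto simp: is_path_to_1_def)
  moreover have "length p > 0" using \<open>p \<noteq> []\<close> by simp
  ultimately have "length p \<le> hlen A N i" "length p > 0" by auto
  then show ?thesis using p(2) by (cases "length p") auto
qed

lemma hlen_pos:
  assumes HL1: "\<forall>i\<in>{1..N}. \<forall>j\<in>{1..N}. A i j > 0 \<longrightarrow> j < i"
    and HL2: "\<forall>i\<in>{2..N}. \<exists>j\<in>{1..<i}. A i j > 0" and i: "i \<in> {2..N}"
  shows "1 \<le> hlen A N i"
proof -
  have "i \<in> {1..N}" using i by auto
  then obtain p where p: "is_path_to_1 A N i p" using path_exists[OF HL1 HL2] by blast
  have "p \<noteq> []" using p by (auto simp: is_path_to_1_def)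
  then obtain y ys where yy: "p = y # ys" by (cases p) auto
  have "ys \<noteq> []"
  proof
    assume "ys = []"
    then show False using p i yy by (auto simp: is_path_to_1_def)
  qed
  then have "length p \<ge> 2" using yy by (cases ys) auto
  then show ?thesis using hlen_ge[OF p] by simp
qed

lemma hlen_le_H: "i \<in> {2..N} \<Longrightarrow> hlen A N i \<le> Hdepth A N"
  unfolding Hdepth_def by (rule Max_ge) auto




lemma inner_deriv:
  assumes "(f has_vector_derivative f') F"
  shows "((\<lambda>s. e \<bullet> f s) has_real_derivative (e \<bullet> f')) F"
  using bounded_linear.has_vector_derivative[OF bounded_linear_inner_right assms]
  by (simp add: has_real_derivative_iff_has_vector_derivative)

lemma const_deriv0:
  fixes f :: "real \<Rightarrow> real"
  assumes "\<forall>t\<in>{0..T}. (f has_real_derivative 0) (at t within {0..})" "t \<in> {0..T}"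
  shows "f t = f 0"
proof -
  have "(\<lambda>s. f s - f 0) t \<le> 0"
    by (rule cmp[where f'="\<lambda>_. 0"]) (use assms in \<open>auto intro!: derivative_eq_intros\<close>)
  moreover have "(\<lambda>s. f 0 - f s) t \<le> 0"
    by (rule cmp[where f'="\<lambda>_. 0"]) (use assms in \<open>auto intro!: derivative_eq_intros\<close>)
  ultimately show ?thesis by simp
qed

lemma core:
  fixes x v :: "real \<Rightarrow> nat \<Rightarrow> 'a::real_inner" and W :: "real \<Rightarrow> nat \<Rightarrow> nat \<Rightarrow> real"
    and L :: "nat \<Rightarrow> nat"
  assumes N1: "N \<ge> 1"
    and dx: "\<forall>t\<ge>0. \<forall>i\<in>{1..N}. ((\<lambda>s. x s i) has_vector_derivative v t i) (at t within {0..})"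
    and dv: "\<forall>t\<ge>0. \<forall>i\<in>{1..N}. ((\<lambda>s. v s i) has_vector_derivative
                 (\<Sum>j\<in>{1..N} - {i}. W t i j *\<^sub>R (v t j - v t i))) (at t within {0..})"
    and Wnn: "\<forall>t\<ge>0. \<forall>i\<in>{1..N}. \<forall>j\<in>{1..N}. W t i j \<ge> 0"
    and W1: "\<forall>t\<ge>0. \<forall>j\<in>{1..N}. W t 1 j = 0"
    and WL: "\<forall>t\<ge>0. \<forall>i\<in>{1..N}. \<forall>j\<in>{1..N}. W t i j \<noteq> 0 \<longrightarrow> L j < L i"
    and L1: "L 1 = 0" and Lpos: "\<forall>i\<in>{2..N}. 1 \<le> L i" and LH: "\<forall>i\<in>{1..N}. L i \<le> H"
    and g: "\<gamma> > 0"
    and Wlow: "\<forall>t\<ge>0. diam N (x t) \<le> r \<longrightarrow> (\<forall>i\<in>{2..N}. \<gamma> \<le> (\<Sum>j\<in>{1..N} - {i}. W t i j))"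
    and cond: "diam N (x 0) + real H * diam N (v 0) / \<gamma> < r"
  shows "flocks N x v"
proof -
  define X0 where "X0 = diam N (x 0)"
  define V0 where "V0 = diam N (v 0)"
  define R where "R = X0 + real H * V0 / \<gamma>"
  have X0nn: "X0 \<ge> 0" and V0nn: "V0 \<ge> 0" using diam_nonneg[OF N1] by (auto simp: X0_def V0_def)
  have Rr: "R < r" using cond by (simp add: R_def X0_def V0_def)
  have X0R: "X0 \<le> R" using V0nn g by (simp add: R_def)
  have EH: "Ef \<gamma> (L i) t \<le> Ef \<gamma> H t" if "i \<in> {1..N}" "t \<ge> 0" for i t
    using Ef_mono[of \<gamma> t "L i" H] g LH that by auto
  have Enn: "Ef \<gamma> k t \<ge> 0" if "t \<ge> 0" for k t using Ef_nonneg g that by simp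
  have pder: "((\<lambda>s. e \<bullet> v s i) has_real_derivative (\<Sum>j\<in>{1..N} - {i}. W t i j * (e \<bullet> v t j - e \<bullet> v t i))) (at t within {0..})"
    if "t \<ge> 0" "i \<in> {1..N}" for e t i
  proof -
    have "((\<lambda>s. e \<bullet> v s i) has_real_derivative e \<bullet> (\<Sum>j\<in>{1..N} - {i}. W t i j *\<^sub>R (v t j - v t i))) (at t within {0..})"
      using dv that by (intro inner_deriv) auto
    moreover have "e \<bullet> (\<Sum>j\<in>{1..N} - {i}. W t i j *\<^sub>R (v t j - v t i)) = (\<Sum>j\<in>{1..N} - {i}. W t i j * (e \<bullet> v t j - e \<bullet> v t i))"
      by (simp add: inner_sum_right inner_diff_right)
    ultimately show ?thesis by simp
  qed
  have v1c: "e \<bullet> v t 1 = e \<bullet> v 0 1" if "t \<ge> 0" for e t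
  proof -
    have "\<forall>s\<in>{0..t}. ((\<lambda>s. e \<bullet> v s 1) has_real_derivative 0) (at s within {0..})"
    proof
      fix s assume s: "s \<in> {0..t}"
      have "(\<Sum>j\<in>{1..N} - {1}. W s 1 j * (e \<bullet> v s j - e \<bullet> v s 1)) = 0"
        using W1 s by (intro sum.neutral) auto
      then show "((\<lambda>s. e \<bullet> v s 1) has_real_derivative 0) (at s within {0..})"
        using pder[of s 1 e] s N1 by auto
    qed
    then show ?thesis using const_deriv0[of t "\<lambda>s. e \<bullet> v s 1" t] that by auto
  qed
  have U: "e \<bullet> v \<tau> i - e \<bullet> v 0 1 \<le> (Max ((\<lambda>k. e \<bullet> v 0 k) ` {1..N}) - e \<bullet> v 0 1) * Ef \<gamma> (L i) \<tau>"
    if T: "\<forall>\<tau>\<in>{0..T}. diam N (x \<tau>) \<le> r" and i: "i \<in> {1..N}" and tau: "\<tau> \<in> {0..T}" for T e i \<tau>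
  proof -
    define c where "c = e \<bullet> v 0 1"
    define M where "M = Max ((\<lambda>k. e \<bullet> v 0 k) ` {1..N})"
    have Mk: "e \<bullet> v 0 k \<le> M" if "k \<in> {1..N}" for k
      unfolding M_def using that by (intro Max_ge) auto
    have Mc: "c \<le> M" unfolding c_def using Mk[of 1] N1 by auto
    have main: "\<forall>i\<in>{1..N}. L i = n \<longrightarrow> (\<forall>\<tau>\<in>{0..T}. e \<bullet> v \<tau> i - c \<le> (M - c) * Ef \<gamma> (L i) \<tau>)" for n
    proof (induction n rule: less_induct)
      case (less n)
      show ?case
      proof (intro ballI impI)
        fix i \<tau> assume i: "i \<in> {1..N}" "L i = n" and \<tau>: "\<tau> \<in> {0..T}"
        show "e \<bullet> v \<tau> i - c \<le> (M - c) * Ef \<gamma> (L i) \<tau>"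
        proof (cases "i = 1")
          case True
          have "e \<bullet> v \<tau> 1 = e \<bullet> v 0 1" using v1c[of \<tau> e] \<tau> by auto
          then show ?thesis using True L1 by (simp add: c_def)
        next
          case False
          then have i2: "i \<in> {2..N}" using i by auto
          then have "1 \<le> L i" using Lpos by blast
          then obtain k where k: "L i = Suc k" by (cases "L i") auto
          define f where "f = (\<lambda>s. e \<bullet> v s i - c - (M - c) * Ef \<gamma> (Suc k) s)"
          define f' where "f' = (\<lambda>s. (\<Sum>j\<in>{1..N}-{i}. W s i j * (e \<bullet> v s j - e \<bullet> v s i))
                 - (M - c) * (- \<gamma> * Ef \<gamma> (Suc k) s + \<gamma> * Ef \<gamma> k s))"
          have "f \<tau> \<le> 0"
          proof (rule cmp[of T f f'])
            show "\<forall>t\<in>{0..T}. (f has_real_derivative f' t) (at t within {0..})"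
            proof
              fix t assume t: "t \<in> {0..T}"
              have d1: "((\<lambda>s. e \<bullet> v s i) has_real_derivative (\<Sum>j\<in>{1..N}-{i}. W t i j * (e \<bullet> v t j - e \<bullet> v t i))) (at t within {0..})"
                using pder[of t i e] t i by auto
              have d2: "(Ef \<gamma> (Suc k) has_real_derivative (- \<gamma> * Ef \<gamma> (Suc k) t + \<gamma> * Ef \<gamma> k t)) (at t within {0..})"
                by (rule has_field_derivative_at_within[OF Ef_deriv])
              have "((\<lambda>s. e \<bullet> v s i - c - (M - c) * Ef \<gamma> (Suc k) s) has_real_derivative
                  (\<Sum>j\<in>{1..N}-{i}. W t i j * (e \<bullet> v t j - e \<bullet> v t i)) - 0 - (M - c) * (- \<gamma> * Ef \<gamma> (Suc k) t + \<gamma> * Ef \<gamma> k t)) (at t within {0..})"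
                by (intro DERIV_diff DERIV_cmult d1 d2 DERIV_const)
              then show "(f has_real_derivative f' t) (at t within {0..})" by (simp add: f_def f'_def)
            qed
          next
            show "f 0 \<le> 0" using Mk[OF i(1)] k by (simp add: f_def Ef_at0)
          next
            show "\<forall>t\<in>{0..T}. f t > 0 \<longrightarrow> f' t \<le> 0"
            proof (intro ballI impI)
              fix t assume t: "t \<in> {0..T}" and ft: "f t > 0"
              define q where "q = e \<bullet> v t i - c"
              define G where "G = (M - c) * Ef \<gamma> k t"
              have IH: "e \<bullet> v t j - c \<le> G" if j: "j \<in> {1..N}" "W t i j \<noteq> 0" for j
              proof -
                have Lj: "L j < n" using WL j i t by auto
                have "e \<bullet> v t j - c \<le> (M - c) * Ef \<gamma> (L j) t"
                  using less.IH[OF Lj] j t by auto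
                also have "\<dots> \<le> G" unfolding G_def
                  using Lj i k Mc t g by (intro mult_left_mono Ef_mono) auto
                finally show ?thesis .
              qed
              have "G \<le> (M - c) * Ef \<gamma> (Suc k) t" unfolding G_def
                using Mc t g by (intro mult_left_mono Ef_mono) auto
              then have qG: "G \<le> q" using ft by (simp add: f_def q_def)
              have "(\<Sum>j\<in>{1..N}-{i}. W t i j * (e \<bullet> v t j - e \<bullet> v t i)) \<le> (\<Sum>j\<in>{1..N}-{i}. W t i j * (G - q))"
              proof (rule sum_mono)
                fix j assume j: "j \<in> {1..N} - {i}"
                show "W t i j * (e \<bullet> v t j - e \<bullet> v t i) \<le> W t i j * (G - q)"
                proof (cases "W t i j = 0")
                  case False
                  then have "e \<bullet> v t j - e \<bullet> v t i \<le> G - q" using IH[of j] j by (simp add: q_def)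
                  then show ?thesis using Wnn t i j by (intro mult_left_mono) auto
                qed simp
              qed
              also have "\<dots> = (\<Sum>j\<in>{1..N}-{i}. W t i j) * (G - q)" by (simp add: sum_distrib_right)
              also have "\<dots> \<le> \<gamma> * (G - q)"
                using Wlow T t i2 qG by (intro mult_right_mono_neg) auto
              finally have "f' t \<le> \<gamma> * (G - q) - (M - c) * (- \<gamma> * Ef \<gamma> (Suc k) t + \<gamma> * Ef \<gamma> k t)"
                by (simp add: f'_def)
              also have "\<dots> = - \<gamma> * f t" by (simp add: f_def q_def G_def algebra_simps)
              also have "\<dots> \<le> 0" using g ft by simp
              finally show "f' t \<le> 0" .
            qed
          next
            show "\<tau> \<in> {0..T}" by fact
          qed
          then show ?thesis using k by (simp add: f_def)
        qed
      qed
    qed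
    then show ?thesis using main[of "L i"] i tau by (simp add: c_def M_def)
  qed
  have exA: "e \<bullet> (v \<tau> i - v \<tau> j) \<le> norm e * V0 * Ef \<gamma> H \<tau>"
    if T: "\<forall>\<tau>\<in>{0..T}. diam N (x \<tau>) \<le> r" and tau: "\<tau> \<in> {0..T}" and ij: "i \<in> {1..N}" "j \<in> {1..N}" for T \<tau> i j e
  proof -
    define c where "c = e \<bullet> v 0 1"
    define M where "M = Max ((\<lambda>k. e \<bullet> v 0 k) ` {1..N})"
    define M' where "M' = Max ((\<lambda>k. (- e) \<bullet> v 0 k) ` {1..N})"
    have "M \<in> (\<lambda>k. e \<bullet> v 0 k) ` {1..N}" unfolding M_def using N1 by (intro Max_in) auto
    then obtain a where a: "a \<in> {1..N}" "M = e \<bullet> v 0 a" by auto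
    have "M' \<in> (\<lambda>k. (- e) \<bullet> v 0 k) ` {1..N}" unfolding M'_def using N1 by (intro Max_in) auto
    then obtain b where b: "b \<in> {1..N}" "M' = (- e) \<bullet> v 0 b" by auto
    have Mc: "c \<le> M" unfolding c_def M_def using N1 by (intro Max_ge) auto
    have M'c: "- c \<le> M'" unfolding c_def M'_def using N1 by (intro Max_ge) auto
    have E1: "Ef \<gamma> (L i) \<tau> \<le> Ef \<gamma> H \<tau>" "Ef \<gamma> (L j) \<tau> \<le> Ef \<gamma> H \<tau>" using EH ij tau by auto
    have "e \<bullet> v \<tau> i - c \<le> (M - c) * Ef \<gamma> (L i) \<tau>"
      using U[OF T ij(1) tau, of e] by (simp add: c_def M_def)
    also have "\<dots> \<le> (M - c) * Ef \<gamma> H \<tau>" using Mc E1 by (intro mult_left_mono) auto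
    finally have 1: "e \<bullet> v \<tau> i - c \<le> (M - c) * Ef \<gamma> H \<tau>" .
    have "(- e) \<bullet> v \<tau> j - (- c) \<le> (M' - (- c)) * Ef \<gamma> (L j) \<tau>"
      using U[OF T ij(2) tau, of "- e"] by (simp add: c_def M'_def)
    also have "\<dots> = (M' + c) * Ef \<gamma> (L j) \<tau>" by simp
    also have "\<dots> \<le> (M' + c) * Ef \<gamma> H \<tau>" using M'c E1 by (intro mult_left_mono) auto
    finally have 2: "- (e \<bullet> v \<tau> j) + c \<le> (M' + c) * Ef \<gamma> H \<tau>" by simp
    have "e \<bullet> (v \<tau> i - v \<tau> j) \<le> (M + M') * Ef \<gamma> H \<tau>"
      using 1 2 by (simp add: inner_diff_right algebra_simps)
    also have "M + M' = e \<bullet> (v 0 a - v 0 b)" using a b by (simp add: inner_diff_right)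
    also have "e \<bullet> (v 0 a - v 0 b) \<le> norm e * V0"
    proof -
      have "e \<bullet> (v 0 a - v 0 b) \<le> norm e * norm (v 0 a - v 0 b)" by (rule norm_cauchy_schwarz)
      also have "\<dots> \<le> norm e * V0" unfolding V0_def using a b by (intro mult_left_mono diam_ge) auto
      finally show ?thesis .
    qed
    then have "e \<bullet> (v 0 a - v 0 b) * Ef \<gamma> H \<tau> \<le> norm e * V0 * Ef \<gamma> H \<tau>"
      using Enn tau by (intro mult_right_mono) auto
    finally show ?thesis .
  qed
  have velA: "norm (v \<tau> i - v \<tau> j) \<le> V0 * Ef \<gamma> H \<tau>"
    if T: "\<forall>\<tau>\<in>{0..T}. diam N (x \<tau>) \<le> r" and tau: "\<tau> \<in> {0..T}" and ij: "i \<in> {1..N}" "j \<in> {1..N}" for T \<tau> i j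
  proof -
    define e where "e = v \<tau> i - v \<tau> j"
    have "norm e * norm e \<le> norm e * (V0 * Ef \<gamma> H \<tau>)"
      using exA[OF T tau ij, of e] by (simp add: e_def dot_square_norm power2_eq_square algebra_simps)
    moreover have "0 \<le> V0 * Ef \<gamma> H \<tau>" using V0nn Enn tau by auto
    ultimately show ?thesis unfolding e_def[symmetric]
      by (cases "norm e = 0") (auto simp: mult_le_cancel_left_pos)
  qed
  have posA: "norm (x \<tau> i - x \<tau> j) \<le> R"
    if T: "\<forall>\<tau>\<in>{0..T}. diam N (x \<tau>) \<le> r" and tau: "\<tau> \<in> {0..T}" and ij: "i \<in> {1..N}" "j \<in> {1..N}" for T \<tau> i j
  proof -
    define e where "e = x \<tau> i - x \<tau> j"
    define h where "h = (\<lambda>s. e \<bullet> (x s i - x s j) + norm e * V0 / \<gamma> * Gf \<gamma> H s)"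
    define h' where "h' = (\<lambda>s. e \<bullet> (v s i - v s j) + norm e * V0 / \<gamma> * (- \<gamma> * Ef \<gamma> H s))"
    have "(\<lambda>s. h s - h 0) \<tau> \<le> 0"
    proof (rule cmp[of T "\<lambda>s. h s - h 0" h' \<tau>])
      show "\<forall>t\<in>{0..T}. ((\<lambda>s. h s - h 0) has_real_derivative h' t) (at t within {0..})"
      proof
        fix t assume t: "t \<in> {0..T}"
        have d1: "((\<lambda>s. x s i - x s j) has_vector_derivative (v t i - v t j)) (at t within {0..})"
          using dx t ij by (intro has_vector_derivative_diff) auto
        have "(h has_real_derivative h' t) (at t within {0..})"
          unfolding h_def h'_def
          by (intro DERIV_add DERIV_cmult inner_deriv d1 has_field_derivative_at_within[OF Gf_deriv])
        then show "((\<lambda>s. h s - h 0) has_real_derivative h' t) (at t within {0..})"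
          using DERIV_diff[OF _ DERIV_const, of h "h' t" t "{0..}" "h 0"] by simp
      qed
    next
      show "\<forall>t\<in>{0..T}. (\<lambda>s. h s - h 0) t > 0 \<longrightarrow> h' t \<le> 0"
      proof (intro ballI impI)
        fix t assume t: "t \<in> {0..T}" and "(\<lambda>s. h s - h 0) t > 0"
        have "e \<bullet> (v t i - v t j) \<le> norm e * V0 * Ef \<gamma> H t" by (rule exA[OF T t ij])
        then show "h' t \<le> 0" using g by (simp add: h'_def)
      qed
    qed (use tau in auto)
    then have "h \<tau> \<le> h 0" by simp
    moreover have "h 0 \<le> norm e * R"
    proof -
      have "e \<bullet> (x 0 i - x 0 j) \<le> norm e * norm (x 0 i - x 0 j)" by (rule norm_cauchy_schwarz)
      also have "\<dots> \<le> norm e * X0" unfolding X0_def using ij by (intro mult_left_mono diam_ge) auto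
      finally show ?thesis using g by (simp add: h_def Gf_at0 R_def algebra_simps)
    qed
    moreover have "norm e * norm e \<le> h \<tau>"
    proof -
      have "0 \<le> norm e * V0 / \<gamma> * Gf \<gamma> H \<tau>" using V0nn g Gf_nonneg[of \<gamma> \<tau> H] tau by auto
      then show ?thesis by (simp add: h_def e_def[symmetric] dot_square_norm power2_eq_square)
    qed
    ultimately have "norm e * norm e \<le> norm e * R" by linarith
    moreover have "R \<ge> 0" using X0R X0nn by linarith
    ultimately show ?thesis unfolding e_def[symmetric]
      by (cases "norm e = 0") (auto simp: mult_le_cancel_left_pos)
  qed
  have allR: "\<forall>t\<ge>0. diam N (x t) \<le> R"
  proof (rule ccontr)
    assume "\<not> (\<forall>t\<ge>0. diam N (x t) \<le> R)"
    define B where "B = {t. 0 \<le> t \<and> R < diam N (x t)}"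
    obtain t0 where "t0 \<ge> 0" "\<not> diam N (x t0) \<le> R" using \<open>\<not> (\<forall>t\<ge>0. diam N (x t) \<le> R)\<close> by blast
    then have "t0 \<in> B" by (simp add: B_def)
    then have Bne: "B \<noteq> {}" by blast
    have Bbdd: "bdd_below B" by (auto simp: B_def intro: bdd_belowI[of _ 0])
    define t1 where "t1 = Inf B"
    have t1nn: "0 \<le> t1" unfolding t1_def using Bne by (intro cInf_greatest) (auto simp: B_def)
    have before: "diam N (x s) \<le> R" if "0 \<le> s" "s < t1" for s
    proof (rule ccontr)
      assume "\<not> diam N (x s) \<le> R"
      then have "s \<in> B" using that by (auto simp: B_def)
      then have "t1 \<le> s" unfolding t1_def using Bbdd by (intro cInf_lower)
      then show False using that by simp
    qed
    have cont: "continuous (at t within {0..}) (\<lambda>s. norm (x s i - x s j))"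
      if "t \<ge> 0" "i \<in> {1..N}" "j \<in> {1..N}" for t i j
    proof -
      have "continuous (at t within {0..}) (\<lambda>s. x s i)" "continuous (at t within {0..}) (\<lambda>s. x s j)"
        using dx that has_vector_derivative_continuous by blast+
      then show ?thesis by (intro continuous_intros)
    qed
    have at1: "norm (x t1 i - x t1 j) \<le> R" if ij: "i \<in> {1..N}" "j \<in> {1..N}" for i j
    proof (rule ccontr)
      assume A: "\<not> norm (x t1 i - x t1 j) \<le> R"
      show False
      proof (cases "t1 = 0")
        case True
        then show False using A diam_ge[OF ij, of "x 0"] X0R by (simp add: X0_def)
      next
        case False
        then have t1p: "t1 > 0" using t1nn by simp
        have "((\<lambda>s. norm (x s i - x s j)) \<longlongrightarrow> norm (x t1 i - x t1 j)) (at t1 within {0..})"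
          using cont[OF t1nn ij] by (simp add: continuous_within)
        then have "eventually (\<lambda>s. R < norm (x s i - x s j)) (at t1 within {0..})"
          using A by (intro order_tendstoD(1)) auto
        then obtain d where d: "d > 0" "\<forall>s\<in>{0..}. s \<noteq> t1 \<and> dist s t1 < d \<longrightarrow> R < norm (x s i - x s j)"
          by (auto simp: eventually_at)
        define s where "s = max 0 (t1 - d/2)"
        have "s \<in> {0..}" "s \<noteq> t1" "dist s t1 < d" "s < t1"
          using d(1) t1p by (auto simp: s_def dist_real_def max_def)
        then have "R < norm (x s i - x s j)" using d(2) by blast
        moreover have "norm (x s i - x s j) \<le> diam N (x s)" by (rule diam_ge[OF ij])
        moreover have "diam N (x s) \<le> R" using before \<open>s < t1\<close> \<open>s \<in> {0..}\<close> by auto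
        ultimately show False by simp
      qed
    qed
    have "eventually (\<lambda>s. \<forall>p\<in>{1..N}\<times>{1..N}. norm (x s (fst p) - x s (snd p)) < r) (at t1 within {0..})"
    proof (rule eventually_ball_finite)
      show "finite ({1..N}\<times>{1..N})" by simp
      show "\<forall>p\<in>{1..N}\<times>{1..N}. eventually (\<lambda>s. norm (x s (fst p) - x s (snd p)) < r) (at t1 within {0..})"
      proof
        fix p assume p: "p \<in> {1..N}\<times>{1..N}"
        have "((\<lambda>s. norm (x s (fst p) - x s (snd p))) \<longlongrightarrow> norm (x t1 (fst p) - x t1 (snd p))) (at t1 within {0..})"
          using cont[OF t1nn, of "fst p" "snd p"] p by (auto simp: continuous_within)
        moreover have "norm (x t1 (fst p) - x t1 (snd p)) < r" using at1[of "fst p" "snd p"] p Rr by auto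
        ultimately show "eventually (\<lambda>s. norm (x s (fst p) - x s (snd p)) < r) (at t1 within {0..})"
          by (rule order_tendstoD(2))
      qed
    qed
    then obtain d where d: "d > 0"
      "\<forall>s\<in>{0..}. s \<noteq> t1 \<and> dist s t1 < d \<longrightarrow> (\<forall>p\<in>{1..N}\<times>{1..N}. norm (x s (fst p) - x s (snd p)) < r)"
      by (auto simp: eventually_at)
    define T where "T = t1 + d/2"
    have goodT: "\<forall>\<tau>\<in>{0..T}. diam N (x \<tau>) \<le> r"
    proof
      fix \<tau> assume \<tau>: "\<tau> \<in> {0..T}"
      show "diam N (x \<tau>) \<le> r"
      proof (cases "\<tau> < t1")
        case True then show ?thesis using before[of \<tau>] \<tau> Rr by auto
      next
        case False
        show ?thesis
        proof (rule diam_le[OF N1])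
          fix i j assume ij: "i \<in> {1..N}" "j \<in> {1..N}"
          show "norm (x \<tau> i - x \<tau> j) \<le> r"
          proof (cases "\<tau> = t1")
            case True then show ?thesis using at1[OF ij] Rr by simp
          next
            case False2: False
            then have "dist \<tau> t1 < d" using \<open>\<not> \<tau> < t1\<close> \<tau> d(1) by (auto simp: T_def dist_real_def)
            moreover have "\<tau> \<in> {0..}" using \<tau> by auto
            ultimately have "\<forall>p\<in>{1..N}\<times>{1..N}. norm (x \<tau> (fst p) - x \<tau> (snd p)) < r"
              using d(2) False2 by blast
            then have "norm (x \<tau> (fst (i,j)) - x \<tau> (snd (i,j))) < r" using ij by blast
            then show ?thesis by simp
          qed
        qed
      qed
    qed
    have "Inf B < T" using d(1) by (simp add: t1_def[symmetric] T_def)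
    then obtain b where b: "b \<in> B" "b < T" using cInf_less_iff[OF Bne Bbdd] by auto
    have "diam N (x b) \<le> R"
      by (rule diam_le[OF N1]) (use posA[OF goodT] b in \<open>auto simp: B_def\<close>)
    then show False using b by (simp add: B_def)
  qed
  have good: "\<forall>\<tau>\<in>{0..t}. diam N (x \<tau>) \<le> r" for t
    using allR Rr by auto
  have vt: "diam N (v t) \<le> V0 * Ef \<gamma> H t" if "t \<ge> 0" for t
    using velA[OF good[of t]] that N1 by (intro diam_le) auto
  show ?thesis
    unfolding flocks_def
  proof
    show "bdd_above ((\<lambda>t. diam N (x t)) ` {0..})" using allR by (auto intro: bdd_aboveI[of _ R])
  next
    have "((\<lambda>t. V0 * Ef \<gamma> H t) \<longlongrightarrow> V0 * 0) at_top"
      by (intro tendsto_mult tendsto_const Ef_lim g)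
    moreover have "eventually (\<lambda>t. 0 \<le> diam N (v t)) at_top" by (intro always_eventually allI diam_nonneg[OF N1])
    moreover have "eventually (\<lambda>t. diam N (v t) \<le> V0 * Ef \<gamma> H t) at_top"
      by (rule eventually_mono[OF eventually_ge_at_top[of "0::real"]]) (rule vt)
    ultimately show "((\<lambda>t. diam N (v t)) \<longlongrightarrow> 0) at_top"
      using tendsto_sandwich[OF _ _ tendsto_const] by fastforce
  qed
qed




lemma ereal_witness:
  assumes k: "k > 0" and lt: "ereal V < ereal k * (SUP r\<in>S. ereal (f r))"
  shows "\<exists>r\<in>S. V < k * f r"
proof (rule ccontr)
  assume "\<not> (\<exists>r\<in>S. V < k * f r)"
  then have "f r \<le> V / k" if "r \<in> S" for r using that k by (auto simp: not_less field_simps)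
  then have "(SUP r\<in>S. ereal (f r)) \<le> ereal (V / k)" by (intro SUP_least) auto
  then have "ereal k * (SUP r\<in>S. ereal (f r)) \<le> ereal k * ereal (V / k)"
    using k by (intro ereal_mult_left_mono) auto
  also have "\<dots> = ereal V" using k by simp
  finally show False using lt by simp
qed

lemma core2:
  fixes x v :: "real \<Rightarrow> nat \<Rightarrow> 'a::real_inner" and Q :: "real \<Rightarrow> nat \<Rightarrow> nat \<Rightarrow> real"
  assumes N2: "N \<ge> 2"
    and alpha_pos: "\<alpha> > 0"
    and A_nonneg: "\<forall>i\<in>{1..N}. \<forall>j\<in>{1..N}. A i j \<ge> 0"
    and HL1: "\<forall>i\<in>{1..N}. \<forall>j\<in>{1..N}. A i j > 0 \<longrightarrow> j < i"
    and HL2: "\<forall>i\<in>{2..N}. \<exists>j\<in>{1..<i}. A i j > 0"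
    and sol: "solves N \<alpha> Q x v"
    and Qnn: "\<forall>t\<ge>0. \<forall>i\<in>{1..N}. \<forall>j\<in>{1..N}. Q t i j \<ge> 0"
    and QA: "\<forall>t i j. A i j = 0 \<longrightarrow> Q t i j = 0"
    and g: "\<gamma> > 0"
    and Qlow: "\<forall>t\<ge>0. diam N (x t) \<le> r \<longrightarrow> (\<forall>i\<in>{2..N}. \<gamma> \<le> \<alpha> * (\<Sum>j\<in>{1..N} - {i}. Q t i j))"
    and cond: "diam N (x 0) + real (Hdepth A N) * diam N (v 0) / \<gamma> < r"
  shows "flocks N x v"
proof -
  define L where "L = (\<lambda>i. if i = 1 then 0 else hlen A N i)"
  define W where "W = (\<lambda>t i j. \<alpha> * Q t i j)"
  have A1: "A 1 j = 0" if "j \<in> {1..N}" for j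
  proof -
    have "1 \<in> {1..N}" using N2 by simp
    then have "\<not> A 1 j > 0" "0 \<le> A 1 j" using HL1 A_nonneg that by fastforce+
    then show ?thesis by linarith
  qed
  show ?thesis
  proof (rule core[where W=W and L=L and H="Hdepth A N" and \<gamma>=\<gamma> and r=r])
    show "N \<ge> 1" using N2 by simp
    show "\<forall>t\<ge>0. \<forall>i\<in>{1..N}. ((\<lambda>s. x s i) has_vector_derivative v t i) (at t within {0..})"
      using sol by (simp add: solves_def)
    show "\<forall>t\<ge>0. \<forall>i\<in>{1..N}. ((\<lambda>s. v s i) has_vector_derivative
                 (\<Sum>j\<in>{1..N} - {i}. W t i j *\<^sub>R (v t j - v t i))) (at t within {0..})"
      using sol by (simp add: solves_def W_def scaleR_sum_right)
    show "\<forall>t\<ge>0. \<forall>i\<in>{1..N}. \<forall>j\<in>{1..N}. W t i j \<ge> 0"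
      using Qnn alpha_pos by (simp add: W_def)
    show "\<forall>t\<ge>0. \<forall>j\<in>{1..N}. W t 1 j = 0"
      using A1 QA by (simp add: W_def)
    show "\<forall>t\<ge>0. \<forall>i\<in>{1..N}. \<forall>j\<in>{1..N}. W t i j \<noteq> 0 \<longrightarrow> L j < L i"
    proof (intro allI impI ballI)
      fix t i j assume t: "t \<ge> 0" and ij: "i \<in> {1..N}" "j \<in> {1..N}" and W0: "W t i j \<noteq> 0"
      then have "A i j \<noteq> 0" using QA by (auto simp: W_def)
      then have Apos: "A i j > 0" using A_nonneg ij by force
      then have ji: "j < i" using HL1 ij by auto
      then have i2: "i \<in> {2..N}" using ij by auto
      show "L j < L i"
      proof (cases "j = 1")
        case True
        then show ?thesis using hlen_pos[OF HL1 HL2 i2] i2 by (simp add: L_def)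
      next
        case False
        then show ?thesis using hlen_step[OF HL1 HL2 ij Apos] ji i2 by (simp add: L_def)
      qed
    qed
    show "L 1 = 0" by (simp add: L_def)
    show "\<forall>i\<in>{2..N}. 1 \<le> L i" using hlen_pos[OF HL1 HL2] by (simp add: L_def)
    show "\<forall>i\<in>{1..N}. L i \<le> Hdepth A N"
      using hlen_le_H[of _ N A] by (auto simp: L_def)
    show "\<gamma> > 0" by (rule g)
    show "\<forall>t\<ge>0. diam N (x t) \<le> r \<longrightarrow> (\<forall>i\<in>{2..N}. \<gamma> \<le> (\<Sum>j\<in>{1..N} - {i}. W t i j))"
      using Qlow by (simp add: W_def sum_distrib_left)
    show "diam N (x 0) + real (Hdepth A N) * diam N (v 0) / \<gamma> < r" by (rule cond)
  qed
qed




lemma key_ineq: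
  fixes a ab Ai As p :: real
  assumes "0 \<le> a" "a \<le> ab" "0 < As" "As \<le> Ai" "0 < p" "p \<le> 1"
  shows "(Ai / (a + Ai)) * ((ab + As) * p / (ab + As * p)) \<le> Ai * p / (a + Ai * p)"
proof -
  have pos1: "a + Ai > 0" "ab + As * p > 0" "a + Ai * p > 0" using assms by (auto intro: add_nonneg_pos)
  have key: "(ab + As) * (a + Ai * p) \<le> (a + Ai) * (ab + As * p)"
  proof -
    have "(a + Ai) * (ab + As * p) - (ab + As) * (a + Ai * p) = (1 - p) * (ab * Ai - a * As)"
      by (simp add: algebra_simps)
    moreover have "a * As \<le> ab * Ai" using assms by (intro mult_mono) auto
    moreover have "0 \<le> (1 - p) * (ab * Ai - a * As)" using assms \<open>a * As \<le> ab * Ai\<close> by simp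
    ultimately show ?thesis by linarith
  qed
  have "(Ai / (a + Ai)) * ((ab + As) * p / (ab + As * p)) = (Ai * p) * ((ab + As) / ((a + Ai) * (ab + As * p)))"
    by (simp add: field_simps)
  also have "(ab + As) / ((a + Ai) * (ab + As * p)) \<le> 1 / (a + Ai * p)"
    using key pos1 by (simp add: divide_simps)
  then have "(Ai * p) * ((ab + As) / ((a + Ai) * (ab + As * p))) \<le> (Ai * p) * (1 / (a + Ai * p))"
    using assms by (intro mult_left_mono) auto
  also have "\<dots> = Ai * p / (a + Ai * p)" by simp
  finally show ?thesis .
qed

lemma frac_mono:
  fixes a m S :: real
  assumes "0 \<le> a" "0 < m" "m \<le> S"
  shows "m / (a + m) \<le> S / (a + S)"
proof -
  have "a * m \<le> a * S" using assms by (intro mult_left_mono) auto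
  then have "m * (a + S) \<le> S * (a + m)" by (simp add: algebra_simps)
  then show ?thesis using assms by (simp add: divide_simps)
qed




theorem theorem3p9:
  fixes N :: nat and \<alpha> :: real and A :: "nat \<Rightarrow> nat \<Rightarrow> real" and \<psi> :: "real \<Rightarrow> real"
  assumes N2: "N \<ge> 2"
    and alpha_pos: "\<alpha> > 0"
    and A_nonneg: "\<forall>i\<in>{1..N}. \<forall>j\<in>{1..N}. A i j \<ge> 0"
    and psi_mono: "\<forall>r1\<ge>0. \<forall>r2\<ge>0. (r1 - r2) * (\<psi> r1 - \<psi> r2) \<le> 0"
    and psi_bounds: "\<forall>r\<ge>0. 0 < \<psi> r \<and> \<psi> r \<le> \<psi> 0" and psi0: "\<psi> 0 \<le> 1"
    and HL1: "\<forall>i\<in>{1..N}. \<forall>j\<in>{1..N}. A i j > 0 \<longrightarrow> j < i"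
    and HL2: "\<forall>i\<in>{2..N}. \<exists>j\<in>{1..<i}. A i j > 0"
  shows
    "(\<forall>(x :: real \<Rightarrow> nat \<Rightarrow> real ^ 'd) v.
        solves N \<alpha> (Q_CS A \<psi> x) x v \<longrightarrow>
        ereal (diam N (v 0)) < ereal (\<alpha> * Astar A N / real (Hdepth A N)) *
            (SUP r\<in>{diam N (x 0)..}. ereal ((r - diam N (x 0)) * \<psi> r)) \<longrightarrow>
        flocks N x v)
   \<and> (\<forall>a :: nat \<Rightarrow> real. (\<forall>i\<in>{1..N}. a i \<ge> 0) \<longrightarrow>
        (\<forall>i\<in>{1..N}. (\<forall>j\<in>{1..N} - {i}. A i j = 0) \<longrightarrow> a i > 0) \<longrightarrow>
        (\<forall>(x :: real \<Rightarrow> nat \<Rightarrow> real ^ 'd) v.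
          solves N \<alpha> (Q_MT A a N \<psi> x) x v \<longrightarrow>
          ereal (diam N (v 0)) < ereal (\<alpha> * Bstar A a N / real (Hdepth A N)) *
            (SUP r\<in>{diam N (x 0)..}. ereal ((r - diam N (x 0)) *
               ((abar a N + Astar A N) * \<psi> r) / (abar a N + Astar A N * \<psi> r))) \<longrightarrow>
          flocks N x v)
        \<and> (abar a N = 0 \<longrightarrow>
            (\<forall>(x :: real \<Rightarrow> nat \<Rightarrow> real ^ 'd) v. solves N \<alpha> (Q_MT A a N \<psi> x) x v \<longrightarrow> flocks N x v)))"
proof -
  have N1: "1 \<in> {1..N}" and N22: "2 \<in> {2..N}" using N2 by auto
  have Apos: "0 < (\<Sum>j\<in>{1..N}-{i}. A i j)" if i: "i \<in> {2..N}" for i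
  proof -
    obtain j where j: "j \<in> {1..<i}" "A i j > 0" using HL2 i by blast
    have "j \<in> {1..N}-{i}" using j i by auto
    moreover have "\<forall>k\<in>{1..N}-{i}. 0 \<le> A i k" using A_nonneg i by auto
    ultimately show ?thesis using j by (intro sum_pos2[of _ j]) auto
  qed
  have Astar_le: "Astar A N \<le> (\<Sum>j\<in>{1..N}-{i}. A i j)" if "i \<in> {2..N}" for i
    unfolding Astar_def using that by (intro Min_le) auto
  have Astar_pos: "Astar A N > 0"
  proof -
    have "Astar A N \<in> (\<lambda>i. \<Sum>j\<in>{1..N} - {i}. A i j) ` {2..N}"
      unfolding Astar_def using N22 by (intro Min_in) auto
    then show ?thesis using Apos by auto
  qed
  have Hpos: "real (Hdepth A N) > 0"
    using hlen_pos[OF HL1 HL2 N22] hlen_le_H[OF N22, of A] by simp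
  have psi_anti: "\<psi> r2 \<le> \<psi> r1" if "0 \<le> r1" "r1 \<le> r2" for r1 r2
  proof (cases "r1 = r2")
    case False
    then have "r1 - r2 < 0" using that by simp
    moreover have "(r1 - r2) * (\<psi> r1 - \<psi> r2) \<le> 0" using psi_mono that by auto
    ultimately have "\<psi> r1 - \<psi> r2 \<ge> 0" by (simp add: mult_le_0_iff)
    then show ?thesis by simp
  qed simp
  have Ssum: "(\<Sum>j\<in>{1..N}-{i}. A i j) * \<psi> r \<le> (\<Sum>j\<in>{1..N}-{i}. A i j * \<psi> (norm (y i - y j)))"
    if i: "i \<in> {2..N}" and d: "diam N y \<le> r" for i r and y :: "nat \<Rightarrow> real ^ 'd"
  proof -
    have "(\<Sum>j\<in>{1..N}-{i}. A i j) * \<psi> r = (\<Sum>j\<in>{1..N}-{i}. A i j * \<psi> r)" by (simp add: sum_distrib_right)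
    also have "\<dots> \<le> (\<Sum>j\<in>{1..N}-{i}. A i j * \<psi> (norm (y i - y j)))"
    proof (rule sum_mono)
      fix j assume j: "j \<in> {1..N}-{i}"
      have "norm (y i - y j) \<le> r" using diam_ge[of i N j y] i j d by auto
      then have "\<psi> r \<le> \<psi> (norm (y i - y j))" by (intro psi_anti) auto
      then show "A i j * \<psi> r \<le> A i j * \<psi> (norm (y i - y j))"
        using A_nonneg i j by (intro mult_left_mono) auto
    qed
    finally show ?thesis .
  qed
  have CS: "\<forall>(x :: real \<Rightarrow> nat \<Rightarrow> real ^ 'd) v.
        solves N \<alpha> (Q_CS A \<psi> x) x v \<longrightarrow>
        ereal (diam N (v 0)) < ereal (\<alpha> * Astar A N / real (Hdepth A N)) *
            (SUP r\<in>{diam N (x 0)..}. ereal ((r - diam N (x 0)) * \<psi> r)) \<longrightarrow>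
        flocks N x v"
  proof (intro allI impI)
    fix x :: "real \<Rightarrow> nat \<Rightarrow> real ^ 'd" and v
    assume sol: "solves N \<alpha> (Q_CS A \<psi> x) x v"
      and lt: "ereal (diam N (v 0)) < ereal (\<alpha> * Astar A N / real (Hdepth A N)) *
            (SUP r\<in>{diam N (x 0)..}. ereal ((r - diam N (x 0)) * \<psi> r))"
    define X0 where "X0 = diam N (x 0)"
    define V0 where "V0 = diam N (v 0)"
    have X0nn: "X0 \<ge> 0" unfolding X0_def using N2 by (intro diam_nonneg) auto
    have kpos: "\<alpha> * Astar A N / real (Hdepth A N) > 0" using alpha_pos Astar_pos Hpos by simp
    obtain r where r: "r \<in> {X0..}" "V0 < (\<alpha> * Astar A N / real (Hdepth A N)) * ((r - X0) * \<psi> r)"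
      using ereal_witness[OF kpos lt] unfolding X0_def V0_def by blast
    define \<gamma> where "\<gamma> = \<alpha> * Astar A N * \<psi> r"
    have psir: "\<psi> r > 0" using psi_bounds r X0nn by auto
    have g: "\<gamma> > 0" unfolding \<gamma>_def using alpha_pos Astar_pos psir by simp
    show "flocks N x v"
    proof (rule core2[OF N2 alpha_pos A_nonneg HL1 HL2 sol, where \<gamma>=\<gamma> and r=r])
      show "\<forall>t\<ge>0. \<forall>i\<in>{1..N}. \<forall>j\<in>{1..N}. Q_CS A \<psi> x t i j \<ge> 0"
        using A_nonneg psi_bounds by (auto simp: Q_CS_def less_imp_le)
      show "\<forall>t i j. A i j = 0 \<longrightarrow> Q_CS A \<psi> x t i j = 0" by (simp add: Q_CS_def)
      show "\<gamma> > 0" by (rule g)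
      show "\<forall>t\<ge>0. diam N (x t) \<le> r \<longrightarrow> (\<forall>i\<in>{2..N}. \<gamma> \<le> \<alpha> * (\<Sum>j\<in>{1..N} - {i}. Q_CS A \<psi> x t i j))"
      proof (intro allI impI ballI)
        fix t i assume t: "t \<ge> 0" and d: "diam N (x t) \<le> r" and i: "i \<in> {2..N}"
        have "Astar A N * \<psi> r \<le> (\<Sum>j\<in>{1..N}-{i}. A i j) * \<psi> r"
          using Astar_le[OF i] psir by (intro mult_right_mono) auto
        also have "\<dots> \<le> (\<Sum>j\<in>{1..N}-{i}. A i j * \<psi> (norm (x t i - x t j)))" by (rule Ssum[OF i d])
        also have "\<dots> = (\<Sum>j\<in>{1..N} - {i}. Q_CS A \<psi> x t i j)"
          by (simp add: Q_CS_def norm_minus_commute)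
        finally show "\<gamma> \<le> \<alpha> * (\<Sum>j\<in>{1..N} - {i}. Q_CS A \<psi> x t i j)"
          unfolding \<gamma>_def using alpha_pos by (simp add: mult.assoc)
      qed
      have "real (Hdepth A N) * V0 < \<gamma> * (r - X0)"
        using r(2) Hpos by (simp add: \<gamma>_def field_simps)
      then have "real (Hdepth A N) * V0 / \<gamma> < r - X0" using g by (simp add: divide_less_eq mult.commute)
      then show "diam N (x 0) + real (Hdepth A N) * diam N (v 0) / \<gamma> < r"
        by (simp add: X0_def V0_def)
    qed
  qed
  have MT: "\<forall>a :: nat \<Rightarrow> real. (\<forall>i\<in>{1..N}. a i \<ge> 0) \<longrightarrow>
        (\<forall>i\<in>{1..N}. (\<forall>j\<in>{1..N} - {i}. A i j = 0) \<longrightarrow> a i > 0) \<longrightarrow>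
        (\<forall>(x :: real \<Rightarrow> nat \<Rightarrow> real ^ 'd) v.
          solves N \<alpha> (Q_MT A a N \<psi> x) x v \<longrightarrow>
          ereal (diam N (v 0)) < ereal (\<alpha> * Bstar A a N / real (Hdepth A N)) *
            (SUP r\<in>{diam N (x 0)..}. ereal ((r - diam N (x 0)) *
               ((abar a N + Astar A N) * \<psi> r) / (abar a N + Astar A N * \<psi> r))) \<longrightarrow>
          flocks N x v)
        \<and> (abar a N = 0 \<longrightarrow>
            (\<forall>(x :: real \<Rightarrow> nat \<Rightarrow> real ^ 'd) v. solves N \<alpha> (Q_MT A a N \<psi> x) x v \<longrightarrow> flocks N x v))"
  proof (intro allI impI)
    fix a :: "nat \<Rightarrow> real"
    assume ann: "\<forall>i\<in>{1..N}. a i \<ge> 0"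
    define ab where "ab = abar a N"
    define As where "As = Astar A N"
    define Bs where "Bs = Bstar A a N"
    have a_le: "a i \<le> ab" if "i \<in> {2..N}" for i unfolding ab_def abar_def using that by (intro Max_ge) auto
    have "0 \<le> a 2" using ann N2 by auto
    then have abnn: "ab \<ge> 0" using a_le[OF N22] by linarith
    have Bi: "(\<Sum>j\<in>{1..N}-{i}. Bmat A a N i j) = (\<Sum>j\<in>{1..N}-{i}. A i j) / (a i + (\<Sum>j\<in>{1..N}-{i}. A i j))" for i
      by (simp add: Bmat_def sum_divide_distrib)
    have Bipos: "(\<Sum>j\<in>{1..N}-{i}. Bmat A a N i j) > 0" if i: "i \<in> {2..N}" for i
    proof -
      have "a i \<ge> 0" using ann i by auto
      then show ?thesis unfolding Bi using Apos[OF i] by (intro divide_pos_pos add_nonneg_pos) auto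
    qed
    have Bs_le: "Bs \<le> (\<Sum>j\<in>{1..N}-{i}. Bmat A a N i j)" if "i \<in> {2..N}" for i
      unfolding Bs_def Bstar_def using that by (intro Min_le) auto
    have Bs_pos: "Bs > 0"
    proof -
      have "Bs \<in> (\<lambda>i. \<Sum>j\<in>{1..N} - {i}. Bmat A a N i j) ` {2..N}"
        unfolding Bs_def Bstar_def using N22 by (intro Min_in) auto
      then show ?thesis using Bipos by auto
    qed
    have kpos: "\<alpha> * Bs / real (Hdepth A N) > 0" using alpha_pos Bs_pos Hpos by simp
    have main: "\<forall>(x :: real \<Rightarrow> nat \<Rightarrow> real ^ 'd) v.
          solves N \<alpha> (Q_MT A a N \<psi> x) x v \<longrightarrow>
          ereal (diam N (v 0)) < ereal (\<alpha> * Bstar A a N / real (Hdepth A N)) *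
            (SUP r\<in>{diam N (x 0)..}. ereal ((r - diam N (x 0)) *
               ((abar a N + Astar A N) * \<psi> r) / (abar a N + Astar A N * \<psi> r))) \<longrightarrow>
          flocks N x v"
    proof (intro allI impI)
      fix x :: "real \<Rightarrow> nat \<Rightarrow> real ^ 'd" and v
      assume sol: "solves N \<alpha> (Q_MT A a N \<psi> x) x v"
        and lt: "ereal (diam N (v 0)) < ereal (\<alpha> * Bstar A a N / real (Hdepth A N)) *
            (SUP r\<in>{diam N (x 0)..}. ereal ((r - diam N (x 0)) *
               ((abar a N + Astar A N) * \<psi> r) / (abar a N + Astar A N * \<psi> r)))"
      define X0 where "X0 = diam N (x 0)"
      define V0 where "V0 = diam N (v 0)"
      have X0nn: "X0 \<ge> 0" unfolding X0_def using N2 by (intro diam_nonneg) auto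
      obtain r where r: "r \<in> {X0..}"
        "V0 < (\<alpha> * Bs / real (Hdepth A N)) * ((r - X0) * ((ab + As) * \<psi> r) / (ab + As * \<psi> r))"
        using ereal_witness[OF kpos[unfolded Bs_def] lt] unfolding X0_def V0_def ab_def As_def Bs_def by blast
      define phi where "phi = (ab + As) * \<psi> r / (ab + As * \<psi> r)"
      define \<gamma> where "\<gamma> = \<alpha> * Bs * phi"
      have "r \<ge> 0" using r X0nn by auto
      then have psir: "\<psi> r > 0" "\<psi> r \<le> 1" using psi_bounds psi0 by force+
      have As_pos: "As > 0" using Astar_pos by (simp add: As_def)
      have phipos: "phi > 0" unfolding phi_def using psir As_pos abnn
        by (intro divide_pos_pos mult_pos_pos add_nonneg_pos) auto
      have g: "\<gamma> > 0" unfolding \<gamma>_def using alpha_pos Bs_pos phipos by simp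
      show "flocks N x v"
      proof (rule core2[OF N2 alpha_pos A_nonneg HL1 HL2 sol, where \<gamma>=\<gamma> and r=r])
        show "\<forall>t\<ge>0. \<forall>i\<in>{1..N}. \<forall>j\<in>{1..N}. Q_MT A a N \<psi> x t i j \<ge> 0"
        proof (intro allI impI ballI)
          fix t :: real and i j assume "t \<ge> 0" and ij: "i \<in> {1..N}" "j \<in> {1..N}"
          have "\<forall>k\<in>{1..N}-{i}. 0 \<le> A i k * \<psi> (norm (x t i - x t k))"
          proof
            fix k assume k: "k \<in> {1..N}-{i}"
            have "0 \<le> A i k" using A_nonneg ij k by auto
            moreover have "0 \<le> \<psi> (norm (x t i - x t k))" using psi_bounds by (simp add: less_imp_le)
            ultimately show "0 \<le> A i k * \<psi> (norm (x t i - x t k))" by simp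
          qed
          then have "0 \<le> a i + (\<Sum>k\<in>{1..N}-{i}. A i k * \<psi> (norm (x t i - x t k)))"
            using ann ij by (intro add_nonneg_nonneg sum_nonneg) auto
          moreover have "0 \<le> A i j * \<psi> (norm (x t i - x t j))"
          proof -
            have "0 \<le> A i j" using A_nonneg ij by auto
            moreover have "0 \<le> \<psi> (norm (x t i - x t j))" using psi_bounds by (simp add: less_imp_le)
            ultimately show ?thesis by simp
          qed
          ultimately show "Q_MT A a N \<psi> x t i j \<ge> 0" unfolding Q_MT_def by simp
        qed
        show "\<forall>t i j. A i j = 0 \<longrightarrow> Q_MT A a N \<psi> x t i j = 0" by (simp add: Q_MT_def)
        show "\<gamma> > 0" by (rule g)
        show "\<forall>t\<ge>0. diam N (x t) \<le> r \<longrightarrow> (\<forall>i\<in>{2..N}. \<gamma> \<le> \<alpha> * (\<Sum>j\<in>{1..N} - {i}. Q_MT A a N \<psi> x t i j))"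
        proof (intro allI impI ballI)
          fix t i assume t: "t \<ge> 0" and d: "diam N (x t) \<le> r" and i: "i \<in> {2..N}"
          define S where "S = (\<Sum>k\<in>{1..N}-{i}. A i k * \<psi> (norm (x t i - x t k)))"
          define Ai where "Ai = (\<Sum>j\<in>{1..N}-{i}. A i j)"
          have ai: "0 \<le> a i" "a i \<le> ab" using ann a_le i by auto
          have AiAs: "As \<le> Ai" using Astar_le[OF i] by (simp add: As_def Ai_def)
          have mS: "Ai * \<psi> r \<le> S" unfolding S_def Ai_def by (rule Ssum[OF i d])
          have mpos: "Ai * \<psi> r > 0" using AiAs As_pos psir by simp
          have sumQ: "(\<Sum>j\<in>{1..N} - {i}. Q_MT A a N \<psi> x t i j) = S / (a i + S)"
            by (simp add: Q_MT_def S_def sum_divide_distrib)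
          have "Bs * phi \<le> (Ai / (a i + Ai)) * phi"
            using Bs_le[OF i] phipos unfolding Bi Ai_def by (intro mult_right_mono) auto
          also have "\<dots> \<le> Ai * \<psi> r / (a i + Ai * \<psi> r)"
            unfolding phi_def using ai AiAs As_pos psir by (intro key_ineq) auto
          also have "\<dots> \<le> S / (a i + S)" using ai mpos mS by (intro frac_mono) auto
          finally have "Bs * phi \<le> S / (a i + S)" .
          then show "\<gamma> \<le> \<alpha> * (\<Sum>j\<in>{1..N} - {i}. Q_MT A a N \<psi> x t i j)"
          proof -
            have "\<alpha> * (Bs * phi) \<le> \<alpha> * (S / (a i + S))"
              using \<open>Bs * phi \<le> S / (a i + S)\<close> alpha_pos by (intro mult_left_mono) auto
            then show ?thesis unfolding sumQ \<gamma>_def by (simp add: mult.assoc)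
          qed
        qed
        have "V0 < (\<alpha> * Bs / real (Hdepth A N)) * ((r - X0) * phi)"
          using r(2) by (simp only: phi_def times_divide_eq_right)
        also have "(\<alpha> * Bs / real (Hdepth A N)) * ((r - X0) * phi) = \<gamma> * (r - X0) / real (Hdepth A N)"
          by (simp add: \<gamma>_def)
        finally have "real (Hdepth A N) * V0 < \<gamma> * (r - X0)"
          using Hpos by (simp add: less_divide_eq mult.commute)
        then have "real (Hdepth A N) * V0 / \<gamma> < r - X0" using g by (simp add: divide_less_eq mult.commute)
        then show "diam N (x 0) + real (Hdepth A N) * diam N (v 0) / \<gamma> < r"
          by (simp add: X0_def V0_def)
      qed
    qed
    show "(\<forall>(x :: real \<Rightarrow> nat \<Rightarrow> real ^ 'd) v.
          solves N \<alpha> (Q_MT A a N \<psi> x) x v \<longrightarrow>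
          ereal (diam N (v 0)) < ereal (\<alpha> * Bstar A a N / real (Hdepth A N)) *
            (SUP r\<in>{diam N (x 0)..}. ereal ((r - diam N (x 0)) *
               ((abar a N + Astar A N) * \<psi> r) / (abar a N + Astar A N * \<psi> r))) \<longrightarrow>
          flocks N x v)
        \<and> (abar a N = 0 \<longrightarrow>
            (\<forall>(x :: real \<Rightarrow> nat \<Rightarrow> real ^ 'd) v. solves N \<alpha> (Q_MT A a N \<psi> x) x v \<longrightarrow> flocks N x v))"
    proof (intro conjI impI allI)
      fix x :: "real \<Rightarrow> nat \<Rightarrow> real ^ 'd" and v
      assume "solves N \<alpha> (Q_MT A a N \<psi> x) x v"
        "ereal (diam N (v 0)) < ereal (\<alpha> * Bstar A a N / real (Hdepth A N)) *
            (SUP r\<in>{diam N (x 0)..}. ereal ((r - diam N (x 0)) *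
               ((abar a N + Astar A N) * \<psi> r) / (abar a N + Astar A N * \<psi> r)))"
      then show "flocks N x v" using main by blast
    next
      fix x :: "real \<Rightarrow> nat \<Rightarrow> real ^ 'd" and v
      assume ab0: "abar a N = 0" and sol: "solves N \<alpha> (Q_MT A a N \<psi> x) x v"
      define X0 where "X0 = diam N (x 0)"
      define V0 where "V0 = diam N (v 0)"
      define k where "k = \<alpha> * Bstar A a N / real (Hdepth A N)"
      have kp: "k > 0" using kpos by (simp add: k_def Bs_def)
      define r where "r = X0 + V0 / k + 1"
      have V0nn: "V0 \<ge> 0" unfolding V0_def using N2 by (intro diam_nonneg) auto
      have X0nn: "X0 \<ge> 0" unfolding X0_def using N2 by (intro diam_nonneg) auto
      have rX: "r \<in> {X0..}" using V0nn kp by (simp add: r_def)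
      have psir: "\<psi> r > 0" using psi_bounds rX X0nn by force
      have fr: "(r - X0) * ((abar a N + Astar A N) * \<psi> r) / (abar a N + Astar A N * \<psi> r) = r - X0"
        using ab0 psir Astar_pos by simp
      have "V0 < k * (r - X0)" using kp by (simp add: r_def field_simps)
      then have "ereal V0 < ereal k * ereal ((r - X0) * ((abar a N + Astar A N) * \<psi> r) / (abar a N + Astar A N * \<psi> r))"
        using fr by simp
      also have "\<dots> \<le> ereal k * (SUP r\<in>{X0..}. ereal ((r - X0) * ((abar a N + Astar A N) * \<psi> r) / (abar a N + Astar A N * \<psi> r)))"
        using kp rX by (intro ereal_mult_left_mono SUP_upper) auto
      finally show "flocks N x v" using main sol unfolding X0_def V0_def k_def by blast
    qed
  qed
  show ?thesis using CS MT by blast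
qed


end
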